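(* Assume the Standing Assumptions in the context, with $\alpha\in(2/3,1)$ and $1<M<1+\frac{3\alpha-2}{\alpha(2-\alpha)}$, and let $u$ be the classical solution of $\partial_t u-\nabla\cdot(a(u)\nabla u)=\sigma(u)\xi-\sigma'(u)\sigma(u)C^{a(u)}$ on $(0,\infty)\times\mathbb{T}^d$, $u(0)=u_0$. Let $\varphi^>:[0,\infty)\to[0,1]$ be smooth, vanishing on $[0,1]$, equal to $1$ on $[2,\infty)$, $\varphi^<=1-\varphi^>$, and for $\delta>0$ let $\Pi^<_{\mathbf x}[\mathcal I\Xi;\bar a](\mathbf y)=\varphi^<(\bar a/\delta)\Pi_{\mathbf x}[\mathcal I\Xi;\bar a](\mathbf y)$. Let $R,T>0$. Then for all $\mathbf y$ with $\|\mathbf y\|_{\mathfrak s}\le R$, $$\int_{D_{\mathbf y}}\big|\sigma(u(\mathbf x))\Pi^<_{\mathbf x}[\mathcal I\Xi;a(u(\mathbf x))](\mathbf x+\mathbf y)\big|\,d\mathbf x\le K\,[\mathcal I\Xi]_\alpha\|\mathbf y\|_{\mathfrak s}^\alpha\,T\,\delta^{1/(M-1)},$$ where $K$ depends only on $C$ (and $M,N,\epsilon$), and $D_{\mathbf y}=\{\mathbf x\in[0,T]\times\mathbb{T}^d:\mathbf x+\mathbf y\in[0,T]\times\mathbb{T}^d\}$.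
   Context: Notation: $\mathbb{T}^d=\mathbb{R}^d/\mathbb{Z}^d$ (functions identified with $1$-periodic functions on $\mathbb{R}^d$); $\mathbf{x}=(t,x),\mathbf y=(s,y),\mathbf z=(r,z)$; $\|(t,x)\|_{\mathfrak s}=(|t|+|x|^2)^{1/2}$; $\varphi^\lambda_{(t,x)}(s,y)=\lambda^{-d-2}\varphi((s-t)/\lambda^2,(y-x)/\lambda)$; $\mathcal B$ = smooth functions supported in the parabolic unit ball with derivatives up to order 2 bounded by 1; $\Phi$ the heat kernel $(4\pi t)^{-d/2}e^{-|x|^2/(4t)}\mathbb 1_{t>0}$, $\Psi(\bar a,(t,x))=\Phi(\bar a t,x)$. Standing Assumptions: $\alpha\in(2/3,1)$, $M>1$, $N\ge M+1$, $p>1$, $C>0$, fixed small $\epsilon>0$. $a\in C^2$, $a\ge a_0>0$, $|v|^{M-1}\le Ca(v)$, $|a'(v)|\le C|v|^{M-2}$, $|a''(v)|\le C|v|^{M-3}$ ($v\ne0$); $\sigma\in C^2$ supported in $[-C,C]$ with $|\sigma^{(j)}(v)|\le C|v|^{N-j}$, $j=0,1,2$. $\xi$ smooth on $\mathbb{R}\times\mathbb{T}^d$, $\Pi_{\mathbf x}[\mathcal I\Xi;\bar a](\mathbf y)=\int_{(0,\infty)\times\mathbb{R}^d}(\Psi(\bar a,\mathbf y-\mathbf z)-\Psi(\bar a,\mathbf x-\mathbf z))\xi(\mathbf z)d\mathbf z$; further symbols $\Pi_{\mathbf x}[\Xi]=\xi$, $\Pi_{\mathbf x}[\Xi\mathcal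 I\Xi;\bar a](\mathbf y)=\Pi_{\mathbf x}[\mathcal I\Xi;\bar a](\mathbf y)\xi(\mathbf y)-c_1^{\bar a}(s)$, $\Pi_{\mathbf x}[(\nabla\mathcal I\Xi)^2;\bar a](\mathbf y)=|\nabla_y\Pi_{\mathbf x}[\mathcal I\Xi;\bar a](\mathbf y)|^2-c_2^{\bar a}(s)$, $\Pi_{\mathbf x}[X\Xi](\mathbf y)=(y-x)\xi(\mathbf y)$ with given counterterms $c_1,c_2$, and $(|\tau|,\mathfrak e(\tau))$ equal to $(\alpha-2,0),(2\alpha-2,1+\epsilon),(2\alpha-2,2+2\epsilon),(\alpha-1,0),(\alpha,1+\epsilon)$ for $\Xi,\Xi\mathcal I\Xi,(\nabla\mathcal I\Xi)^2,X\Xi,\mathcal I\Xi$. Model bounds: for each compact $\mathfrak K$ there are constants $[\tau]_{|\tau|}$ with $|\langle\partial^m_{\bar a}\Pi_{\mathbf x}[\tau;\bar a],\varphi^\lambda_{\mathbf x}\rangle|\le[\tau]_{|\tau|}\lambda^{|\tau|}\bar a^{-\mathfrak e(\tau)-m}$ and $|\partial^m_{\bar a}\Pi_{\mathbf x}[\mathcal I\Xi;\bar a](\mathbf y)|\le[\mathcal I\Xi]_\alpha\|\mathbf x-\mathbf y\|_{\mathfrak s}^\alpha\bar a^{-1-\epsilon-m}$ uniformly for $\mathbf x,\mathbf y\in\mathfrak K$, $\lambda\in(0,1)$, $\bar a\in a(\mathrm{supp}\,\sigma)\setminus\{0\}$, $m\in\{0,1\}$, $\varphi\in\mathcal B$.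 Counterterm $C^{\bar a}$ with $\int_0^T\sup_v|\sigma'\sigma(v)(C^{a(v)}-c_1^{a(v)}(t))|dt\le C$ and $\int_0^T\sup_v|\sigma^2(v)/v(c_1^{a(v)}(t)-a(v)c_2^{a(v)}(t))|dt\le C$. $u_0$ smooth with $\|u_0\|_{L^p}\le C$. *)

theory Defs
  imports "HOL-Analysis.Analysis"
begin

text \<open>Space-time points are pairs (t, x) :: real \<times> (real^'d); functions on the torus
  are 1-periodic functions on real^'d.\<close>

definition pnorm :: "real \<times> (real^'d) \<Rightarrow> real" where
  "pnorm z = sqrt (\<bar>fst z\<bar> + (norm (snd z))\<^sup>2)"

definition unit_cell :: "(real^'d) set" where
  "unit_cell = {x. \<forall>i. 0 \<le> x $ i \<and> x $ i < 1}"

definition periodic_sp :: "(real^'d \<Rightarrow> 'b) \<Rightarrow> bool" where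
  "periodic_sp f \<longleftrightarrow> (\<forall>x i. f (x + axis i 1) = f x)"

definition periodic_st :: "(real \<times> (real^'d) \<Rightarrow> 'b) \<Rightarrow> bool" where
  "periodic_st f \<longleftrightarrow> (\<forall>t x i. f (t, x + axis i 1) = f (t, x))"

definition dir_deriv :: "'a::real_normed_vector \<Rightarrow> ('a \<Rightarrow> real) \<Rightarrow> 'a \<Rightarrow> real" where
  "dir_deriv v f x = deriv (\<lambda>h. f (x + h *\<^sub>R v)) 0"

definition smooth :: "('a::real_normed_vector \<Rightarrow> real) \<Rightarrow> bool" where
  "smooth f \<longleftrightarrow> (\<forall>vs. foldr dir_deriv vs f differentiable_on UNIV)"

definition C2 :: "(real \<Rightarrow> real) \<Rightarrow> bool" where
  "C2 f \<longleftrightarrow> (\<forall>v. f differentiable at v) \<and> (\<forall>v. deriv f differentiable at v)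
              \<and> continuous_on UNIV (deriv (deriv f))"

definition heat :: "real \<times> (real^'d) \<Rightarrow> real" where
  "heat z = (if fst z > 0
     then (4 * pi * fst z) powr (- real CARD('d) / 2) * exp (- (norm (snd z))\<^sup>2 / (4 * fst z))
     else 0)"

definition Psi :: "real \<Rightarrow> real \<times> (real^'d) \<Rightarrow> real" where
  "Psi ab z = heat (ab * fst z, snd z)"

definition PiI :: "(real \<times> (real^'d) \<Rightarrow> real) \<Rightarrow> real \<Rightarrow> real \<times> (real^'d) \<Rightarrow> real \<times> (real^'d) \<Rightarrow> real" where
  "PiI \<xi> ab x y = (LINT z : {z. fst z > 0} | lborel. (Psi ab (y - z) - Psi ab (x - z)) * \<xi> z)"

definition dt :: "(real \<times> (real^'d) \<Rightarrow> real) \<Rightarrow> real \<times> (real^'d) \<Rightarrow> real" where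
  "dt f z = deriv (\<lambda>s. f (s, snd z)) (fst z)"

definition dxi :: "'d \<Rightarrow> (real \<times> (real^'d) \<Rightarrow> real) \<Rightarrow> real \<times> (real^'d) \<Rightarrow> real" where
  "dxi i f z = deriv (\<lambda>h. f (fst z, snd z + h *\<^sub>R axis i 1)) 0"

definition classical_solution ::
  "(real \<Rightarrow> real) \<Rightarrow> (real \<Rightarrow> real) \<Rightarrow> (real \<times> (real^'d) \<Rightarrow> real) \<Rightarrow> (real \<Rightarrow> real)
   \<Rightarrow> (real^'d \<Rightarrow> real) \<Rightarrow> (real \<times> (real^'d) \<Rightarrow> real) \<Rightarrow> bool" where
  "classical_solution a \<sigma> \<xi> Cc u0 u \<longleftrightarrow>
     periodic_st u \<and>
     continuous_on {z. fst z \<ge> 0} u \<and>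
     (\<forall>x. u (0, x) = u0 x) \<and>
     (\<forall>z. fst z > 0 \<longrightarrow>
        (\<lambda>s. u (s, snd z)) differentiable (at (fst z)) \<and>
        (\<forall>i. (\<lambda>h. u (fst z, snd z + h *\<^sub>R axis i 1)) differentiable (at 0)) \<and>
        (\<forall>i. (\<lambda>h. a (u (fst z, snd z + h *\<^sub>R axis i 1)) * dxi i u (fst z, snd z + h *\<^sub>R axis i 1))
               differentiable (at 0))) \<and>
     continuous_on {z. fst z > 0} (dt u) \<and>
     (\<forall>i. continuous_on {z. fst z > 0} (dxi i u)) \<and>
     (\<forall>i. continuous_on {z. fst z > 0} (dxi i (dxi i u))) \<and>
     (\<forall>z. fst z > 0 \<longrightarrow>
        dt u z = (\<Sum>i\<in>UNIV. dxi i (\<lambda>w. a (u w) * dxi i u w) z)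
                 + \<sigma> (u z) * \<xi> z - deriv \<sigma> (u z) * \<sigma> (u z) * Cc (a (u z)))"

definition a_assms :: "real \<Rightarrow> real \<Rightarrow> (real \<Rightarrow> real) \<Rightarrow> bool" where
  "a_assms C M a \<longleftrightarrow> C2 a \<and> (\<exists>a0>0. \<forall>v. a v \<ge> a0) \<and>
     (\<forall>v. \<bar>v\<bar> powr (M - 1) \<le> C * a v) \<and>
     (\<forall>v. v \<noteq> 0 \<longrightarrow> \<bar>deriv a v\<bar> \<le> C * \<bar>v\<bar> powr (M - 2)) \<and>
     (\<forall>v. v \<noteq> 0 \<longrightarrow> \<bar>deriv (deriv a) v\<bar> \<le> C * \<bar>v\<bar> powr (M - 3))"

definition sigma_assms :: "real \<Rightarrow> real \<Rightarrow> (real \<Rightarrow> real) \<Rightarrow> bool" where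
  "sigma_assms C N \<sigma> \<longleftrightarrow> C2 \<sigma> \<and> (\<forall>v. \<bar>v\<bar> > C \<longrightarrow> \<sigma> v = 0) \<and>
     (\<forall>v. \<bar>\<sigma> v\<bar> \<le> C * \<bar>v\<bar> powr N) \<and>
     (\<forall>v. \<bar>deriv \<sigma> v\<bar> \<le> C * \<bar>v\<bar> powr (N - 1)) \<and>
     (\<forall>v. \<bar>deriv (deriv \<sigma>) v\<bar> \<le> C * \<bar>v\<bar> powr (N - 2))"

definition supp :: "(real \<Rightarrow> real) \<Rightarrow> real set" where
  "supp f = closure {v. f v \<noteq> 0}"

definition IXi_bound ::
  "real \<Rightarrow> real \<Rightarrow> (real \<Rightarrow> real) \<Rightarrow> (real \<Rightarrow> real) \<Rightarrow> (real \<times> (real^'d) \<Rightarrow> real)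
   \<Rightarrow> (real \<times> (real^'d)) set \<Rightarrow> real \<Rightarrow> bool" where
  "IXi_bound \<alpha> \<epsilon> a \<sigma> \<xi> Kset c \<longleftrightarrow>
     (\<forall>x\<in>Kset. \<forall>y\<in>Kset. \<forall>ab \<in> a ` supp \<sigma> - {0}.
        \<bar>PiI \<xi> ab x y\<bar> \<le> c * pnorm (x - y) powr \<alpha> * ab powr (-1 - \<epsilon>) \<and>
        \<bar>deriv (\<lambda>b. PiI \<xi> b x y) ab\<bar> \<le> c * pnorm (x - y) powr \<alpha> * ab powr (-2 - \<epsilon>))"

definition cutoff :: "(real \<Rightarrow> real) \<Rightarrow> bool" where
  "cutoff \<phi> \<longleftrightarrow> smooth \<phi> \<and> (\<forall>s\<ge>0. 0 \<le> \<phi> s \<and> \<phi> s \<le> 1) \<and>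
     (\<forall>s. 0 \<le> s \<and> s \<le> 1 \<longrightarrow> \<phi> s = 0) \<and> (\<forall>s\<ge>2. \<phi> s = 1)"

text \<open>D_y = {x \<in> [0,T] \<times> T^d : x + y \<in> [0,T] \<times> T^d}, torus represented by the unit cell.\<close>
definition Dom :: "real \<Rightarrow> real \<times> (real^'d) \<Rightarrow> (real \<times> (real^'d)) set" where
  "Dom T y = {x. 0 \<le> fst x \<and> fst x \<le> T \<and> 0 \<le> fst x + fst y \<and> fst x + fst y \<le> T
                 \<and> snd x \<in> unit_cell}"

end

theory Submission imports Defs begin

lemma pointwise:
  fixes C M N \<epsilon> c A py \<delta> v s P \<phi>v :: real
  assumes M: "M > 1" and N: "N \<ge> M + 1" and e0: "0 < \<epsilon>" "\<epsilon> < 1 / (M - 1)" and C: "C > 0"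
    and sv: "\<bar>s\<bar> \<le> C * \<bar>v\<bar> powr N" and svC: "s \<noteq> 0 \<Longrightarrow> \<bar>v\<bar> \<le> C"
    and aa: "\<bar>v\<bar> powr (M - 1) \<le> C * A" and A: "A > 0"
    and ph: "0 \<le> \<phi>v" "\<phi>v \<le> 1" "A / \<delta> \<ge> 2 \<Longrightarrow> \<phi>v = 1" and d: "\<delta> > 0"
    and P: "s \<noteq> 0 \<Longrightarrow> \<bar>P\<bar> \<le> c * py * A powr (-1 - \<epsilon>)"
  shows "ennreal \<bar>s * ((1 - \<phi>v) * P)\<bar> \<le>
    ennreal (C powr (2 + \<epsilon>) * C powr (N - (M - 1) * (1 + \<epsilon>) - 1) * (2 * C) powr (1 / (M - 1))
       * c * py * \<delta> powr (1 / (M - 1)))"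
proof (cases "s = 0 \<or> \<phi>v = 1")
  case True
  then show ?thesis by auto
next
  case False
  hence s0: "s \<noteq> 0" and p1: "\<phi>v \<noteq> 1" by auto
  define w where "w = \<bar>v\<bar>"
  define e where "e = N - (M - 1) * (1 + \<epsilon>)"
  define r where "r = 1 / (M - 1)"
  have r0: "r > 0" using M by (simp add: r_def)
  have w0: "w > 0"
  proof (rule ccontr)
    assume "\<not> w > 0" hence "v = 0" by (simp add: w_def)
    hence "\<bar>s\<bar> \<le> 0" using sv by simp
    thus False using s0 by simp
  qed
  have wC: "w \<le> C" using svC s0 w_def by simp
  have Ad: "A < 2 * \<delta>"
  proof (rule ccontr)
    assume "\<not> A < 2 * \<delta>" hence "A / \<delta> \<ge> 2" using d by (simp add: field_simps)
    thus False using ph(3) p1 by simp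
  qed
  have e1: "e \<ge> 1"
  proof -
    have "\<epsilon> * (M - 1) < 1" using e0 M by (simp add: field_simps)
    thus ?thesis unfolding e_def using N by (simp add: algebra_simps)
  qed
  have wm: "w powr (M - 1) > 0" using w0 by simp
  have Alow: "w powr (M - 1) / C \<le> A" using aa C by (simp add: w_def field_simps)
  have Apow: "A powr (-1 - \<epsilon>) \<le> (w powr (M - 1) / C) powr (-1 - \<epsilon>)"
    by (rule powr_mono2') (use e0 Alow wm C in auto)
  also have "\<dots> = w powr (- (M - 1) * (1 + \<epsilon>)) * C powr (1 + \<epsilon>)"
    using w0 C by (simp add: powr_divide powr_powr powr_minus_divide divide_powr_uminus algebra_simps)
  finally have Apow2: "A powr (-1 - \<epsilon>) \<le> w powr (- (M - 1) * (1 + \<epsilon>)) * C powr (1 + \<epsilon>)" .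
  have cpy: "c * py \<ge> 0"
  proof -
    have "0 \<le> c * py * A powr (-1 - \<epsilon>)" using P[OF s0] by linarith
    moreover have "A powr (-1 - \<epsilon>) > 0" using A by simp
    ultimately show ?thesis by (simp add: zero_le_mult_iff)
  qed
  have "\<bar>s * ((1 - \<phi>v) * P)\<bar> = \<bar>s\<bar> * (1 - \<phi>v) * \<bar>P\<bar>"
    using ph by (simp add: abs_mult)
  also have "\<dots> \<le> \<bar>s\<bar> * \<bar>P\<bar>"
    using ph by (simp add: mult_right_le_one_le mult_left_le_one_le mult_right_mono mult_le_cancel_left2)
  also have "\<dots> \<le> (C * w powr N) * (c * py * (w powr (- (M - 1) * (1 + \<epsilon>)) * C powr (1 + \<epsilon>)))"
  proof (rule mult_mono)
    show "\<bar>s\<bar> \<le> C * w powr N" using sv w_def by simp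
    show "\<bar>P\<bar> \<le> c * py * (w powr (- (M - 1) * (1 + \<epsilon>)) * C powr (1 + \<epsilon>))"
      using P[OF s0] Apow2 cpy by (meson mult_left_mono order_trans)
  qed (use C w0 in auto)
  also have "\<dots> = c * py * C powr (2 + \<epsilon>) * w powr e"
  proof -
    have "w powr N * w powr (- (M - 1) * (1 + \<epsilon>)) = w powr e"
      unfolding e_def by (simp add: powr_add[symmetric] algebra_simps)
    moreover have "C * C powr (1 + \<epsilon>) = C powr (2 + \<epsilon>)"
      using C by (simp add: powr_add power2_eq_square)
    ultimately show ?thesis by (metis (no_types, lifting) mult.assoc mult.commute mult.left_commute)
  qed
  also have "\<dots> \<le> c * py * C powr (2 + \<epsilon>) * (C powr (e - 1) * ((2 * C) powr r * \<delta> powr r))"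
  proof (rule mult_left_mono)
    have we: "w powr e = w * w powr (e - 1)" using w0 powr_add[of w 1 "e - 1"] by simp
    have "w powr (e - 1) \<le> C powr (e - 1)" using e1 w0 wC by (intro powr_mono2) auto
    moreover have "w \<le> (2 * C) powr r * \<delta> powr r"
    proof -
      have "w = (w powr (M - 1)) powr r" using w0 M by (simp add: powr_powr r_def)
      also have "\<dots> \<le> (2 * C * \<delta>) powr r"
      proof (rule powr_mono2)
        have "C * A \<le> C * (2 * \<delta>)" using Ad C by simp
        thus "w powr (M - 1) \<le> 2 * C * \<delta>" using aa unfolding w_def by simp
      qed (use r0 in auto)
      also have "\<dots> = (2 * C) powr r * \<delta> powr r" using C d by (simp add: powr_mult)
      finally show ?thesis .
    qed
    ultimately show "w powr e \<le> C powr (e - 1) * ((2 * C) powr r * \<delta> powr r)"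
      unfolding we using w0
      by (smt (verit, ccfv_SIG) mult.commute mult_mono powr_ge_zero)
  qed (use cpy C in simp)
  finally have "\<bar>s * ((1 - \<phi>v) * P)\<bar> \<le> C powr (2 + \<epsilon>) * C powr (e - 1) * (2 * C) powr r
       * c * py * \<delta> powr r" by (simp add: algebra_simps)
  then show ?thesis unfolding e_def r_def by (simp add: ennreal_leI)
qed
lemma box_measure:
  assumes "T \<ge> 0"
  shows "emeasure lborel (cbox (0::real, 0::real^'d) (T, 1)) = ennreal T"
proof -
  have "emeasure lborel (cbox (0::real, 0::real^'d) (T, 1)) = ennreal (measure lborel (cbox (0::real, 0::real^'d) (T, 1)))"
    by (simp add: emeasure_lborel_cbox_eq measure_lborel_cbox_eq)
  also have "measure lborel (cbox (0::real, 0::real^'d) (T, 1)) = T"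
  proof -
    have ne: "cbox (0::real^'d) 1 \<noteq> {}" by (simp add: interval_cbox_cart[symmetric] less_eq_vec_def)
    show ?thesis unfolding content_Pair using assms content_cbox_cart[OF ne] by simp
  qed
  finally show ?thesis .
qed

lemma dom_sub: "Dom T y \<subseteq> cbox (0::real, 0::real^'d) (T, 1)"
  unfolding Dom_def unit_cell_def
  by (auto simp: interval_cbox_cart[symmetric] less_eq_vec_def less_imp_le mem_Times_iff  cbox_Pair_eq)

lemma pnorm_diff: "pnorm (x - (x + y)) = pnorm (y :: real \<times> (real^'d))"
  by (simp add: pnorm_def)

theorem lemma2p2:
  fixes M N :: real
  assumes "M > 1" and "N \<ge> M + 1"
  shows "\<exists>\<epsilon>0>0. \<forall>\<epsilon>. 0 < \<epsilon> \<and> \<epsilon> < \<epsilon>0 \<longrightarrow> (\<forall>C>0. \<exists>K. \<forall>(\<alpha>::real) (p::real) a \<sigma>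
           (\<xi> :: real \<times> (real^'d) \<Rightarrow> real) u0 u Cc \<phi>g (\<delta>::real) (R::real) (T::real) Kset c y.
    (2/3 < \<alpha> \<and> \<alpha> < 1 \<and> M < 1 + (3 * \<alpha> - 2) / (\<alpha> * (2 - \<alpha>)) \<and> p > 1 \<and>
     a_assms C M a \<and> sigma_assms C N \<sigma> \<and>
     smooth \<xi> \<and> periodic_st \<xi> \<and>
     smooth u0 \<and> periodic_sp u0 \<and> (LINT x : unit_cell | lborel. \<bar>u0 x\<bar> powr p) powr (1 / p) \<le> C \<and>
     classical_solution a \<sigma> \<xi> Cc u0 u \<and>
     cutoff \<phi>g \<and> \<delta> > 0 \<and> R > 0 \<and> T > 0 \<and>
     compact Kset \<and> (\<forall>x\<in>Dom T y. x \<in> Kset \<and> x + y \<in> Kset) \<and>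
     IXi_bound \<alpha> \<epsilon> a \<sigma> \<xi> Kset c \<and>
     pnorm y \<le> R)
    \<longrightarrow> (\<integral>\<^sup>+ x \<in> Dom T y. ennreal \<bar>\<sigma> (u x) * ((1 - \<phi>g (a (u x) / \<delta>)) * PiI \<xi> (a (u x)) x (x + y))\<bar> \<partial>lborel)
        \<le> ennreal (K * c * pnorm y powr \<alpha> * T * \<delta> powr (1 / (M - 1))))"
proof (rule exI[of _ "1 / (M - 1)"], intro conjI allI impI)
  show "0 < 1 / (M - 1)" using assms by simp
  fix \<epsilon> C :: real
  assume e: "0 < \<epsilon> \<and> \<epsilon> < 1 / (M - 1)" and C: "C > 0"
  show "\<exists>K. \<forall>(\<alpha>::real) (p::real) a \<sigma>
           (\<xi> :: real \<times> (real^'d) \<Rightarrow> real) u0 u Cc \<phi>g (\<delta>::real) (R::real) (T::real) Kset c y.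
    (2/3 < \<alpha> \<and> \<alpha> < 1 \<and> M < 1 + (3 * \<alpha> - 2) / (\<alpha> * (2 - \<alpha>)) \<and> p > 1 \<and>
     a_assms C M a \<and> sigma_assms C N \<sigma> \<and>
     smooth \<xi> \<and> periodic_st \<xi> \<and>
     smooth u0 \<and> periodic_sp u0 \<and> (LINT x : unit_cell | lborel. \<bar>u0 x\<bar> powr p) powr (1 / p) \<le> C \<and>
     classical_solution a \<sigma> \<xi> Cc u0 u \<and>
     cutoff \<phi>g \<and> \<delta> > 0 \<and> R > 0 \<and> T > 0 \<and>
     compact Kset \<and> (\<forall>x\<in>Dom T y. x \<in> Kset \<and> x + y \<in> Kset) \<and>
     IXi_bound \<alpha> \<epsilon> a \<sigma> \<xi> Kset c \<and>
     pnorm y \<le> R)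
    \<longrightarrow> (\<integral>\<^sup>+ x \<in> Dom T y. ennreal \<bar>\<sigma> (u x) * ((1 - \<phi>g (a (u x) / \<delta>)) * PiI \<xi> (a (u x)) x (x + y))\<bar> \<partial>lborel)
        \<le> ennreal (K * c * pnorm y powr \<alpha> * T * \<delta> powr (1 / (M - 1)))"
  proof (intro exI[of _ "C powr (2 + \<epsilon>) * C powr (N - (M - 1) * (1 + \<epsilon>) - 1) * (2 * C) powr (1 / (M - 1))"] allI impI)
    fix \<alpha> p :: real and a \<sigma> :: "real \<Rightarrow> real" and \<xi> :: "real \<times> (real^'d) \<Rightarrow> real"
      and u0 u Cc \<phi>g and \<delta> R T :: real and Kset c and y :: "real \<times> (real^'d)"
    assume H: "2/3 < \<alpha> \<and> \<alpha> < 1 \<and> M < 1 + (3 * \<alpha> - 2) / (\<alpha> * (2 - \<alpha>)) \<and> p > 1 \<and>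
     a_assms C M a \<and> sigma_assms C N \<sigma> \<and>
     smooth \<xi> \<and> periodic_st \<xi> \<and>
     smooth u0 \<and> periodic_sp u0 \<and> (LINT x : unit_cell | lborel. \<bar>u0 x\<bar> powr p) powr (1 / p) \<le> C \<and>
     classical_solution a \<sigma> \<xi> Cc u0 u \<and>
     cutoff \<phi>g \<and> \<delta> > 0 \<and> R > 0 \<and> T > 0 \<and>
     compact Kset \<and> (\<forall>x\<in>Dom T y. x \<in> Kset \<and> x + y \<in> Kset) \<and>
     IXi_bound \<alpha> \<epsilon> a \<sigma> \<xi> Kset c \<and>
     pnorm y \<le> R"
    define K where "K = C powr (2 + \<epsilon>) * C powr (N - (M - 1) * (1 + \<epsilon>) - 1) * (2 * C) powr (1 / (M - 1))"
    define B where "B = K * c * pnorm y powr \<alpha> * \<delta> powr (1 / (M - 1))"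
    have aA: "a_assms C M a" and sA: "sigma_assms C N \<sigma>" and cut: "cutoff \<phi>g" and d: "\<delta> > 0"
      and T: "T > 0" and Dk: "\<forall>x\<in>Dom T y. x \<in> Kset \<and> x + y \<in> Kset" and IB: "IXi_bound \<alpha> \<epsilon> a \<sigma> \<xi> Kset c"
      using H by auto
    obtain a0 where a0: "a0 > 0" "\<forall>v. a v \<ge> a0" using aA unfolding a_assms_def by blast
    have pw: "ennreal \<bar>\<sigma> (u x) * ((1 - \<phi>g (a (u x) / \<delta>)) * PiI \<xi> (a (u x)) x (x + y))\<bar> \<le> ennreal B"
      if x: "x \<in> Dom T y" for x
    proof -
      let ?v = "u x"
      have Apos: "a ?v > 0" using a0 by (smt (verit))
      have cs: "0 \<le> \<phi>g (a ?v / \<delta>)" "\<phi>g (a ?v / \<delta>) \<le> 1" "a ?v / \<delta> \<ge> 2 \<Longrightarrow> \<phi>g (a ?v / \<delta>) = 1"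
      proof -
        have cc: "\<forall>s\<ge>0. 0 \<le> \<phi>g s \<and> \<phi>g s \<le> 1" "\<forall>s\<ge>2. \<phi>g s = 1"
          using cut unfolding cutoff_def by blast+
        have "a ?v / \<delta> \<ge> 0" using Apos d by simp
        from cc(1)[rule_format, OF this]
        show "0 \<le> \<phi>g (a ?v / \<delta>)" "\<phi>g (a ?v / \<delta>) \<le> 1" by simp_all
        show "a ?v / \<delta> \<ge> 2 \<Longrightarrow> \<phi>g (a ?v / \<delta>) = 1" using cc(2) by simp
      qed
      have P: "\<bar>PiI \<xi> (a ?v) x (x + y)\<bar> \<le> c * pnorm y powr \<alpha> * a ?v powr (-1 - \<epsilon>)"
        if s0: "\<sigma> ?v \<noteq> 0"
      proof -
        have "?v \<in> {v. \<sigma> v \<noteq> 0}" using s0 by simp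
        hence "?v \<in> supp \<sigma>" unfolding supp_def by (rule subsetD[OF closure_subset])
        hence "a ?v \<in> a ` supp \<sigma> - {0}" using Apos by simp
        note mem = this
        have xk: "x \<in> Kset" "x + y \<in> Kset" using bspec[OF Dk x] by simp_all
        note IB[unfolded IXi_bound_def, rule_format, OF xk(1) xk(2) mem]
        from conjunct1[OF this] show ?thesis unfolding pnorm_diff .
      qed
      have s1: "\<bar>\<sigma> ?v\<bar> \<le> C * \<bar>?v\<bar> powr N" and s2: "\<sigma> ?v \<noteq> 0 \<Longrightarrow> \<bar>?v\<bar> \<le> C"
        using sA unfolding sigma_assms_def by (blast, force)
      have a1: "\<bar>?v\<bar> powr (M - 1) \<le> C * a ?v" using aA unfolding a_assms_def by blast
      show ?thesis unfolding B_def K_def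
        by (rule pointwise[OF assms e[THEN conjunct1] e[THEN conjunct2] C s1 s2 a1 Apos cs d P])
    qed
    have "(\<integral>\<^sup>+ x \<in> Dom T y. ennreal \<bar>\<sigma> (u x) * ((1 - \<phi>g (a (u x) / \<delta>)) * PiI \<xi> (a (u x)) x (x + y))\<bar> \<partial>lborel)
        \<le> (\<integral>\<^sup>+ x. ennreal B * indicator (cbox (0::real, 0::real^'d) (T, 1)) x \<partial>lborel)"
    proof (rule nn_integral_mono)
      fix x :: "real \<times> (real^'d)"
      show "ennreal \<bar>\<sigma> (u x) * ((1 - \<phi>g (a (u x) / \<delta>)) * PiI \<xi> (a (u x)) x (x + y))\<bar> * indicator (Dom T y) x
          \<le> ennreal B * indicator (cbox (0::real, 0::real^'d) (T, 1)) x"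
        using pw[of x] dom_sub[of T y] by (auto simp: indicator_def)
    qed
    also have "\<dots> = ennreal B * ennreal T"
    proof -
      have bm: "emeasure lborel (cbox (0::real, 0::real^'d) (T, 1)) = ennreal T"
        by (rule box_measure) (use T in simp)
      show ?thesis by (subst nn_integral_cmult_indicator) (simp_all add: bm)
    qed
    also have "\<dots> \<le> ennreal (K * c * pnorm y powr \<alpha> * T * \<delta> powr (1 / (M - 1)))"
    proof (cases "B \<ge> 0")
      case True
      then show ?thesis using T by (simp add: ennreal_mult[symmetric] B_def algebra_simps)
    next
      case False
      then show ?thesis by (simp add: ennreal_neg)
    qed
    finally have fin: "(\<integral>\<^sup>+ x \<in> Dom T y. ennreal \<bar>\<sigma> (u x) * ((1 - \<phi>g (a (u x) / \<delta>)) * PiI \<xi> (a (u x)) x (x + y))\<bar> \<partial>lborel)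
        \<le> ennreal (K * c * pnorm y powr \<alpha> * T * \<delta> powr (1 / (M - 1)))" .
    show "(\<integral>\<^sup>+ x \<in> Dom T y. ennreal \<bar>\<sigma> (u x) * ((1 - \<phi>g (a (u x) / \<delta>)) * PiI \<xi> (a (u x)) x (x + y))\<bar> \<partial>lborel)
        \<le> ennreal ((C powr (2 + \<epsilon>) * C powr (N - (M - 1) * (1 + \<epsilon>) - 1) * (2 * C) powr (1 / (M - 1))) * c * pnorm y powr \<alpha> * T * \<delta> powr (1 / (M - 1)))"
      using fin unfolding K_def .
  qed
qed

end
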